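(* Let $B\in\Gamma^q_u$ be an affine binarization polytope. Then there exists a linear binarization polytope $B'\in\Gamma^q_u$ such that $B'=h(B)$ for some unimodular transformation $h:\mathbb{R}^{1+q}\to\mathbb{R}^{1+q}$.
   Context: For positive integers $q,u$, $\Gamma^q_u$ is the set of rational polytopes $B\subseteq\{(x,z)\in\mathbb{R}\times[0,1]^q:0\le x\le u\}$ with $\operatorname{proj}_x(B\cap(\mathbb{R}\times\{0,1\}^q))=\{0,1,\dots,u\}$ (binarization polytopes). $B$ is affine if there are $\alpha\in\mathbb{R}^q$ and $\alpha_0\in\mathbb{R}$ with $x=\alpha^Tz+\alpha_0$ for all $(x,z)\in B$; it is linear if this holds with $\alpha_0=0$. A unimodular transformation of $\mathbb{R}^N$ is a map $y\mapsto Uy+v$ with $U$ an integral $N\times N$ matrix of determinant $\pm1$ and $v\in\mathbb{Z}^N$. *)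

theory Defs
  imports "HOL-Analysis.Analysis"
begin

text \<open>Points of R^(1+q) are vectors indexed by unit + 'q, where CARD('q) = q.
  The coordinate Inl () is x, the coordinates Inr i are z.\<close>

definition xc :: "real^(unit + 'q::finite) \<Rightarrow> real" where
  "xc y = y $ Inl ()"

definition zc :: "real^(unit + 'q::finite) \<Rightarrow> real^'q" where
  "zc y = (\<chi> i. y $ Inr i)"

definition rational_polytope :: "(real^'n::finite) set \<Rightarrow> bool" where
  "rational_polytope B \<longleftrightarrow>
     (\<exists>V. finite V \<and> (\<forall>v\<in>V. \<forall>i. v $ i \<in> \<rat>) \<and> B = convex hull V)"

definition Gamma :: "nat \<Rightarrow> (real^(unit + 'q::finite)) set set" where
  "Gamma u = {B. rational_polytope B \<and>
      (\<forall>y\<in>B. 0 \<le> xc y \<and> xc y \<le> real u \<and> (\<forall>i. 0 \<le> zc y $ i \<and> zc y $ i \<le> 1)) \<and>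
      xc ` {y\<in>B. \<forall>i. zc y $ i \<in> {0, 1}} = real ` {0..u}}"

definition affine_bp :: "(real^(unit + 'q::finite)) set \<Rightarrow> bool" where
  "affine_bp B \<longleftrightarrow> (\<exists>(\<alpha>::real^'q) (\<alpha>0::real). \<forall>y\<in>B. xc y = \<alpha> \<bullet> zc y + \<alpha>0)"

definition linear_bp :: "(real^(unit + 'q::finite)) set \<Rightarrow> bool" where
  "linear_bp B \<longleftrightarrow> (\<exists>(\<alpha>::real^'q). \<forall>y\<in>B. xc y = \<alpha> \<bullet> zc y)"

definition unimodular_transformation :: "(real^'n::finite \<Rightarrow> real^'n) \<Rightarrow> bool" where
  "unimodular_transformation h \<longleftrightarrow>
     (\<exists>(U::real^'n^'n) (v::real^'n).
        (\<forall>i j. U $ i $ j \<in> \<int>) \<and> (det U = 1 \<or> det U = -1) \<and> (\<forall>i. v $ i \<in> \<int>) \<and>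
        h = (\<lambda>y. U *v y + v))"

end

theory Submission
  imports Defs
begin

lemma prod_pm1:
  fixes f :: "'a \<Rightarrow> real"
  assumes "finite A" "\<And>i. f i = 1 \<or> f i = -1"
  shows "prod f A = 1 \<or> prod f A = -1"
  using assms(1)
proof (induction A rule: finite_induct)
  case empty then show ?case by simp
next
  case (insert x F)
  then show ?case using assms(2)[of x] by auto
qed

theorem proposition2:
  fixes B :: "(real^(unit + 'q::finite)) set" and u :: nat
  assumes "u > 0" and "B \<in> Gamma u" and "affine_bp B"
  shows "\<exists>B' h. B' \<in> Gamma u \<and> linear_bp B' \<and> unimodular_transformation h \<and> B' = h ` B"
proof -
  from assms(3) obtain \<alpha> \<alpha>0 where aff: "\<And>y. y \<in> B \<Longrightarrow> xc y = (\<alpha>::real^'q) \<bullet> zc y + \<alpha>0"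
    unfolding affine_bp_def by blast
  have G: "rational_polytope B"
    "\<And>y. y\<in>B \<Longrightarrow> 0 \<le> xc y \<and> xc y \<le> real u \<and> (\<forall>i. 0 \<le> zc y $ i \<and> zc y $ i \<le> 1)"
    "xc ` {y\<in>B. \<forall>i. zc y $ i \<in> {0, 1}} = real ` {0..u}"
    using assms(2) unfolding Gamma_def by auto
  have "(0::real) \<in> real ` {0..u}" by force
  then obtain y0 where y0: "y0 \<in> B" "\<forall>i. zc y0 $ i \<in> {0,1}" "xc y0 = 0"
    using G(3) by (metis (no_types, lifting) image_iff mem_Collect_eq)
  define s where "s = zc y0"
  have s01: "\<And>i. s $ i = 0 \<or> s $ i = 1" using y0(2) s_def by auto
  have a0: "\<alpha>0 = - (\<alpha> \<bullet> s)" using aff[OF y0(1)] y0(3) s_def by simp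
  define U :: "real^(unit+'q)^(unit+'q)" where
    "U = (\<chi> k l. if k = l then (case k of Inl _ \<Rightarrow> 1 | Inr i \<Rightarrow> 1 - 2 * s $ i) else 0)"
  define v :: "real^(unit+'q)" where "v = (\<chi> k. case k of Inl _ \<Rightarrow> 0 | Inr i \<Rightarrow> s $ i)"
  define h where "h = (\<lambda>y. U *v y + v)"
  have hc: "h y $ k = (case k of Inl _ \<Rightarrow> y $ k | Inr i \<Rightarrow> (1 - 2 * s $ i) * y $ k + s $ i)" for y k
  proof -
    have "(U *v y) $ k = (\<Sum>l\<in>UNIV. (if k = l then (case k of Inl _ \<Rightarrow> 1 | Inr i \<Rightarrow> 1 - 2 * s $ i) else 0) * y $ l)"
      by (simp add: U_def matrix_vector_mult_def)
    also have "\<dots> = (case k of Inl _ \<Rightarrow> 1 | Inr i \<Rightarrow> 1 - 2 * s $ i) * y $ k"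
      by (simp add: if_distrib[of "\<lambda>c. c * y $ _"] cong: if_cong)
    finally show ?thesis by (simp add: h_def v_def split: sum.splits)
  qed
  have hx: "xc (h y) = xc y" for y by (simp add: xc_def hc)
  have hz: "zc (h y) $ i = (1 - 2 * s $ i) * zc y $ i + s $ i" for y i by (simp add: zc_def hc)
  have uni: "unimodular_transformation h"
    unfolding unimodular_transformation_def
  proof (intro exI conjI)
    show "\<forall>i j. U $ i $ j \<in> \<int>"
    proof (intro allI)
      fix i j
      have "2 * s $ b \<in> \<int>" for b using s01[of b] by auto
      then show "U $ i $ j \<in> \<int>"
        by (cases i) (auto simp: U_def)
    qed
    have "det U = prod (\<lambda>i. U$i$i) UNIV" by (rule det_diagonal) (simp add: U_def)
    moreover have "prod (\<lambda>i. U$i$i) UNIV = 1 \<or> prod (\<lambda>i. U$i$i) UNIV = -1"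
    proof (rule prod_pm1)
      fix i show "U$i$i = 1 \<or> U$i$i = -1" using s01 by (cases i) (auto simp: U_def)
    qed simp
    ultimately show "det U = 1 \<or> det U = -1" by simp
    have "s $ b \<in> \<int>" for b using s01[of b] by auto
    then show "\<forall>i. v $ i \<in> \<int>" by (auto simp: v_def split: sum.splits)
  qed (simp add: h_def)
  have rat: "rational_polytope (h ` B)"
  proof -
    obtain V where V: "finite V" "\<forall>v\<in>V. \<forall>i. v $ i \<in> \<rat>" "B = convex hull V"
      using G(1) unfolding rational_polytope_def by blast
    have "h ` B = (\<lambda>x. v + x) ` ((\<lambda>y. U *v y) ` (convex hull V))"
      by (simp add: h_def V(3) image_image add.commute)
    also have "\<dots> = (\<lambda>x. v + x) ` (convex hull ((\<lambda>y. U *v y) ` V))"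
      by (simp add: convex_hull_linear_image)
    also have "\<dots> = convex hull ((\<lambda>x. v + x) ` ((\<lambda>y. U *v y) ` V))"
      by (rule convex_hull_translation[symmetric])
    also have "\<dots> = convex hull (h ` V)"
      by (simp add: image_image h_def add.commute)
    finally have e: "h ` B = convex hull (h ` V)" .
    have "\<forall>w\<in>h ` V. \<forall>i. w $ i \<in> \<rat>"
    proof (intro ballI allI)
      fix w i assume "w \<in> h ` V"
      then obtain y where y: "y \<in> V" "w = h y" by blast
      have sr: "s $ j \<in> \<rat>" for j using s01[of j] by auto
      show "w $ i \<in> \<rat>" using V(2) y sr
        by (cases i) (auto simp: hc intro!: Rats_add Rats_mult Rats_diff)
    qed
    then show ?thesis unfolding rational_polytope_def using e V(1) by blast
  qed
  have box: "\<forall>y\<in>h ` B. 0 \<le> xc y \<and> xc y \<le> real u \<and> (\<forall>i. 0 \<le> zc y $ i \<and> zc y $ i \<le> 1)"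
  proof
    fix y' assume "y' \<in> h ` B"
    then obtain y where y: "y \<in> B" "y' = h y" by blast
    have "0 \<le> zc y' $ i \<and> zc y' $ i \<le> 1" for i
      using G(2)[OF y(1)] s01[of i] by (auto simp: y(2) hz)
    then show "0 \<le> xc y' \<and> xc y' \<le> real u \<and> (\<forall>i. 0 \<le> zc y' $ i \<and> zc y' $ i \<le> 1)"
      using G(2)[OF y(1)] by (simp add: y(2) hx)
  qed
  have bin: "(\<forall>i. zc (h y) $ i \<in> {0, 1}) \<longleftrightarrow> (\<forall>i. zc y $ i \<in> {0, 1})" for y
  proof -
    have "zc (h y) $ i \<in> {0, 1} \<longleftrightarrow> zc y $ i \<in> {0, 1}" for i
      using s01[of i] by (auto simp: hz)
    then show ?thesis by blast
  qed
  have proj: "xc ` {y\<in>h ` B. \<forall>i. zc y $ i \<in> {0, 1}} = real ` {0..u}"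
  proof -
    have "{y\<in>h ` B. \<forall>i. zc y $ i \<in> {0, 1}} = h ` {y\<in>B. \<forall>i. zc y $ i \<in> {0, 1}}"
      using bin by auto
    then have "xc ` {y\<in>h ` B. \<forall>i. zc y $ i \<in> {0, 1}} = xc ` {y\<in>B. \<forall>i. zc y $ i \<in> {0, 1}}"
      by (simp add: image_image hx)
    then show ?thesis using G(3) by simp
  qed
  have lin: "linear_bp (h ` B)"
    unfolding linear_bp_def
  proof (intro exI ballI)
    fix y' assume "y' \<in> h ` B"
    then obtain y where y: "y \<in> B" "y' = h y" by blast
    have "(\<chi> i. (1 - 2 * s $ i) * \<alpha> $ i) \<bullet> zc y' = (\<Sum>i\<in>UNIV. (1 - 2 * s $ i) * \<alpha> $ i * ((1 - 2 * s $ i) * zc y $ i + s $ i))"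
      by (simp add: inner_vec_def y(2) hz)
    also have "\<dots> = (\<Sum>i\<in>UNIV. \<alpha> $ i * zc y $ i - \<alpha> $ i * s $ i)"
    proof (rule sum.cong)
      fix i show "(1 - 2 * s $ i) * \<alpha> $ i * ((1 - 2 * s $ i) * zc y $ i + s $ i) = \<alpha> $ i * zc y $ i - \<alpha> $ i * s $ i"
        using s01[of i] by (auto simp: algebra_simps)
    qed simp
    also have "\<dots> = \<alpha> \<bullet> zc y + \<alpha>0"
      by (simp add: a0 inner_vec_def sum_subtractf)
    also have "\<dots> = xc y'" using aff[OF y(1)] by (simp add: y(2) hx)
    finally show "xc y' = (\<chi> i. (1 - 2 * s $ i) * \<alpha> $ i) \<bullet> zc y'" by simp
  qed
  show ?thesis
    apply (rule exI[of _ "h ` B"], rule exI[of _ h])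
    using rat box proj lin uni unfolding Gamma_def by blast
qed

end
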